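(* Let $f\in C^1(\mathbb{R})$ satisfy (f1), $f_0\in(0,+\infty)$, $f_\infty=0$, $f'(s)<Nf(s)/s$ for all $s>0$ and $f'(s)>Nf(s)/s$ for all $s<0$. Then every negative solution $u$ of (MO) (for any $\lambda>0$) is stable; hence it is non-degenerate and has Morse index $M(u)=0$.
   Context: Let $N\ge1$ be an integer. For $\lambda\ge0$, problem (MO) is: find $u\in C^2[0,1]$ with $\left((u')^N\right)'=\lambda^N N r^{N-1}f(-u)$ in $(0,1)$, $u'(0)=u(1)=0$. Condition (f1): $f(s)s^N>0$ for $s\neq0$. $f_0^N=\lim_{s\to0}f(s)/s^N$, $f_\infty^N=\lim_{|s|\to\infty}f(s)/s^N$. For a solution $u$ of (MO), set $v=-u$; the linearized eigenvalue problem at $u$ is $\left(-\phi'(-v')^{N-1}\right)'-\lambda^N r^{N-1}f'(v)\phi=\frac{\mu}{N}\phi$ in $(0,1)$, $\phi'(0)=\phi(1)=0$. The solution $u$ is stable if all eigenvalues $\mu$ of this problem are positive, degenerate if $0$ is an eigenvalue, and its Morse index $M(u)$ is the number of negative eigenvalues. *)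

theory Defs
  imports "HOL-Analysis.Analysis"
begin

definition C2_on01 :: "(real \<Rightarrow> real) \<Rightarrow> (real \<Rightarrow> real) \<Rightarrow> bool" where
  "C2_on01 u u1 \<longleftrightarrow> (\<exists>u2. (\<forall>r\<in>{0..1}. (u has_real_derivative u1 r) (at r within {0..1})
       \<and> (u1 has_real_derivative u2 r) (at r within {0..1})) \<and> continuous_on {0..1} u2)"

definition MO_solution :: "nat \<Rightarrow> real \<Rightarrow> (real \<Rightarrow> real) \<Rightarrow> (real \<Rightarrow> real) \<Rightarrow> (real \<Rightarrow> real) \<Rightarrow> bool" where
  "MO_solution N lam f u u1 \<longleftrightarrow> C2_on01 u u1
     \<and> (\<forall>r\<in>{0<..<1}. ((\<lambda>t. (u1 t) ^ N) has_real_derivative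
            lam ^ N * real N * r ^ (N - 1) * f (- u r)) (at r))
     \<and> u1 0 = 0 \<and> u 1 = 0"

text \<open>mu is an eigenvalue of the linearized problem at u (v = -u, so -v' = u' = u1):
  (-phi' (-v')^(N-1))' - lambda^N r^(N-1) f'(v) phi = (mu/N) phi in (0,1),
  phi'(0) = phi(1) = 0, with a nontrivial eigenfunction phi in C^2[0,1].\<close>
definition lin_eigenvalue :: "nat \<Rightarrow> real \<Rightarrow> (real \<Rightarrow> real) \<Rightarrow> (real \<Rightarrow> real) \<Rightarrow> (real \<Rightarrow> real) \<Rightarrow> real \<Rightarrow> bool" where
  "lin_eigenvalue N lam f' u u1 mu \<longleftrightarrow> (\<exists>phi phi1.
     C2_on01 phi phi1 \<and> (\<exists>r\<in>{0..1}. phi r \<noteq> 0)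
     \<and> (\<forall>r\<in>{0<..<1}. \<exists>g. ((\<lambda>t. - phi1 t * (u1 t) ^ (N - 1)) has_real_derivative g) (at r)
            \<and> g - lam ^ N * r ^ (N - 1) * f' (- u r) * phi r = mu / real N * phi r)
     \<and> phi1 0 = 0 \<and> phi 1 = 0)"

definition stable_sol :: "nat \<Rightarrow> real \<Rightarrow> (real \<Rightarrow> real) \<Rightarrow> (real \<Rightarrow> real) \<Rightarrow> (real \<Rightarrow> real) \<Rightarrow> bool" where
  "stable_sol N lam f' u u1 \<longleftrightarrow> (\<forall>mu. lin_eigenvalue N lam f' u u1 mu \<longrightarrow> mu > 0)"

definition degenerate_sol :: "nat \<Rightarrow> real \<Rightarrow> (real \<Rightarrow> real) \<Rightarrow> (real \<Rightarrow> real) \<Rightarrow> (real \<Rightarrow> real) \<Rightarrow> bool" where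
  "degenerate_sol N lam f' u u1 \<longleftrightarrow> lin_eigenvalue N lam f' u u1 0"

definition morse_index :: "nat \<Rightarrow> real \<Rightarrow> (real \<Rightarrow> real) \<Rightarrow> (real \<Rightarrow> real) \<Rightarrow> (real \<Rightarrow> real) \<Rightarrow> nat" where
  "morse_index N lam f' u u1 = card {mu. lin_eigenvalue N lam f' u u1 mu \<and> mu < 0}"

end

theory Submission
  imports Defs
begin

lemma C2_facts:
  assumes "C2_on01 u u1"
  shows "continuous_on {0..1} u" "continuous_on {0..1} u1"
    "\<And>r. r \<in> {0<..<1} \<Longrightarrow> (u has_real_derivative u1 r) (at r)"
proof -
  obtain u2 where d: "\<forall>r\<in>{0..1}. (u has_real_derivative u1 r) (at r within {0..1})
       \<and> (u1 has_real_derivative u2 r) (at r within {0..1})"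
    using assms unfolding C2_on01_def by blast
  show "continuous_on {0..1} u" by (rule DERIV_continuous_on) (use d in blast)
  show "continuous_on {0..1} u1" by (rule DERIV_continuous_on) (use d in blast)
  fix r :: real assume r: "r \<in> {0<..<1}"
  then have "(u has_real_derivative u1 r) (at r within {0..1})" using d by auto
  then show "(u has_real_derivative u1 r) (at r)"
    using r at_within_Icc_at[of 0 r 1] by auto
qed

lemma strict_inc:
  fixes F F' :: "real \<Rightarrow> real"
  assumes "a < b" "continuous_on {a..b} F"
    "\<And>t. a < t \<Longrightarrow> t < b \<Longrightarrow> (F has_real_derivative F' t) (at t) \<and> F' t > 0"
  shows "F a < F b"
proof -
  obtain l z where z: "a < z" "z < b" "DERIV F z :> l" "F b - F a = (b - a) * l"
    using MVT[OF assms(1,2)] assms(3) real_differentiable_def by meson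
  have "l = F' z" using DERIV_unique z(3) assms(3)[OF z(1,2)] by blast
  then have "l > 0" using assms(3)[OF z(1,2)] by simp
  then have "(b - a) * l > 0" using assms(1) by simp
  then show ?thesis using z(4) by linarith
qed

lemma nz_same_sign:
  fixes g :: "real \<Rightarrow> real"
  assumes "continuous_on {x..y} g" "x \<le> y" "\<And>t. t \<in> {x..y} \<Longrightarrow> g t \<noteq> 0"
  shows "g x > 0 \<longleftrightarrow> g y > 0"
proof
  assume gx: "g x > 0"
  show "g y > 0"
  proof (rule ccontr)
    assume "\<not> g y > 0"
    then have "g y \<le> 0" by simp
    then obtain t where "x \<le> t" "t \<le> y" "g t = 0" using IVT2'[of g y 0 x] gx assms(1,2) by force
    then show False using assms(3) by auto
  qed
next
  assume gy: "g y > 0"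
  show "g x > 0"
  proof (rule ccontr)
    assume "\<not> g x > 0"
    then have "g x \<le> 0" by simp
    then obtain t where "x \<le> t" "t \<le> y" "g t = 0" using IVT'[of g x 0 y] gy assms(1,2) by force
    then show False using assms(3) by auto
  qed
qed

lemma deriv_sign_right:
  fixes g :: "real \<Rightarrow> real"
  assumes "(g has_real_derivative D) (at a)" "g a = 0" "a < b"
    "\<And>t. a < t \<Longrightarrow> t < b \<Longrightarrow> g t > 0"
  shows "D \<ge> 0"
proof (rule ccontr)
  assume "\<not> D \<ge> 0"
  then have "D < 0" by simp
  then obtain d where d: "d > 0" "\<And>h. h > 0 \<Longrightarrow> h < d \<Longrightarrow> g a > g (a + h)"
    using DERIV_neg_dec_right[OF assms(1)] by blast
  define h where "h = min (d/2) ((b - a)/2)"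
  have h1: "h \<le> (b - a)/2" and h2: "h \<le> d/2" unfolding h_def by (rule min.cobounded2, rule min.cobounded1)
  have hpos: "h > 0" using d assms(3) by (simp add: h_def)
  have "a + h < b" using h1 hpos assms(3) by (simp add: field_simps)
  moreover have "h < d" using h2 hpos d(1) by (simp add: field_simps)
  ultimately have "h > 0" "h < d" "a + h < b" using hpos by auto
  then show False using d(2)[of h] assms(2) assms(4)[of "a+h"] by auto
qed

lemma deriv_sign_left:
  fixes g :: "real \<Rightarrow> real"
  assumes "(g has_real_derivative D) (at b)" "g b = 0" "a < b"
    "\<And>t. a < t \<Longrightarrow> t < b \<Longrightarrow> g t > 0"
  shows "D \<le> 0"
proof (rule ccontr)
  assume "\<not> D \<le> 0"
  then have "D > 0" by simp
  then obtain d where d: "d > 0" "\<And>h. h > 0 \<Longrightarrow> h < d \<Longrightarrow> g (b - h) < g b"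
    using DERIV_pos_inc_left[OF assms(1)] by blast
  define h where "h = min (d/2) ((b - a)/2)"
  have h1: "h \<le> (b - a)/2" and h2: "h \<le> d/2" unfolding h_def by (rule min.cobounded2, rule min.cobounded1)
  have hpos: "h > 0" using d assms(3) by (simp add: h_def)
  have "a < b - h" using h1 hpos assms(3) by (simp add: field_simps)
  moreover have "h < d" using h2 hpos d(1) by (simp add: field_simps)
  ultimately have "h > 0" "h < d" "a < b - h" using hpos by auto
  then show False using d(2)[of h] assms(2) assms(4)[of "b-h"] by auto
qed

lemma mu_pos:
  fixes N :: nat and f f' :: "real \<Rightarrow> real" and lam :: real and u u1 :: "real \<Rightarrow> real"
  assumes N: "N \<ge> 1"
    and f1: "\<And>s. s \<noteq> 0 \<Longrightarrow> f s * s ^ N > 0"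
    and fpos: "\<And>s. s > 0 \<Longrightarrow> f' s < real N * f s / s"
    and lam: "lam > 0"
    and sol: "MO_solution N lam f u u1"
    and negative: "\<forall>r\<in>{0..<1}. u r < 0"
    and ev: "lin_eigenvalue N lam f' u u1 mu"
  shows "mu > 0"
proof (rule ccontr)
  assume "\<not> mu > 0"
  then have mu: "mu \<le> 0" by simp
  have C2u: "C2_on01 u u1"
    and deq: "\<And>r. r \<in> {0<..<1} \<Longrightarrow> ((\<lambda>t. (u1 t) ^ N) has_real_derivative
            lam ^ N * real N * r ^ (N - 1) * f (- u r)) (at r)"
    and u10: "u1 0 = 0" and u1z: "u 1 = 0"
    using sol unfolding MO_solution_def by auto
  note cu = C2_facts(1)[OF C2u] and cu1 = C2_facts(2)[OF C2u] and du = C2_facts(3)[OF C2u]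
  have Npos: "real N > 0" using N by simp
  have z0: "(0::real) ^ N = 0" using N by simp
  have fv: "f (- u r) > 0" if "r \<in> {0..<1}" for r
  proof -
    have s: "- u r > 0" using negative that by auto
    then have "(- u r) ^ N > 0" by simp
    moreover have "f (- u r) * (- u r) ^ N > 0" using f1 s by simp
    ultimately show ?thesis using s by (simp add: zero_less_mult_iff)
  qed
  have u1N: "u1 r ^ N > 0" if "r \<in> {0<..1}" for r
  proof -
    have "u1 0 ^ N < u1 r ^ N"
    proof (rule strict_inc[where F = "\<lambda>t. u1 t ^ N" and F' = "\<lambda>t. lam ^ N * real N * t ^ (N - 1) * f (- u t)"])
      show "0 < r" using that by simp
      show "continuous_on {0..r} (\<lambda>t. u1 t ^ N)"
        using that by (intro continuous_intros continuous_on_subset[OF cu1]) auto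
      fix t assume t: "0 < t" "t < r"
      then show "((\<lambda>t. u1 t ^ N) has_real_derivative lam ^ N * real N * t ^ (N - 1) * f (- u t)) (at t)
          \<and> lam ^ N * real N * t ^ (N - 1) * f (- u t) > 0"
        using deq[of t] fv[of t] that lam Npos by auto
    qed
    then show ?thesis using u10 z0 by auto
  qed
  have u1pos: "u1 r > 0" if "r \<in> {0<..1}" for r
  proof (rule ccontr)
    assume "\<not> u1 r > 0"
    moreover have "u1 r \<noteq> 0" using u1N[OF that] z0 by (metis less_irrefl)
    ultimately have r: "u1 r < 0" by simp
    have neg: "u1 t < 0" if t: "t \<in> {0<..1}" for t
    proof -
      have nz: "u1 x \<noteq> 0" if "x \<in> {0<..1}" for x using u1N[OF that] z0 by (metis less_irrefl)
      show ?thesis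
      proof (cases "t \<le> r")
        case True
        have "u1 t > 0 \<longleftrightarrow> u1 r > 0"
          by (rule nz_same_sign) (use True t \<open>r \<in> {0<..1}\<close> nz in \<open>auto intro: continuous_on_subset[OF cu1]\<close>)
        then show ?thesis using r nz[OF t] by linarith
      next
        case False
        have "u1 r > 0 \<longleftrightarrow> u1 t > 0"
          by (rule nz_same_sign) (use False t \<open>r \<in> {0<..1}\<close> nz in \<open>auto intro: continuous_on_subset[OF cu1]\<close>)
        then show ?thesis using r nz[OF t] by linarith
      qed
    qed
    have "- u 0 < - u 1"
      by (rule strict_inc[where F = "\<lambda>t. - u t" and F' = "\<lambda>t. - u1 t"])
        (auto intro!: continuous_intros cu derivative_eq_intros du neg)
    moreover have "u 0 < 0" using negative by simp
    ultimately show False using u1z by simp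
  qed
  have u1nn: "u1 r ^ (N - 1) \<ge> 0" if "r \<in> {0..1}" for r
  proof (cases "r = 0")
    case True then show ?thesis using u10 by simp
  next
    case False then show ?thesis using u1pos[of r] that by simp
  qed
  obtain phi phi1 where C2phi: "C2_on01 phi phi1" and r0ex: "\<exists>r\<in>{0..1}. phi r \<noteq> 0"
    and eq: "\<forall>r\<in>{0<..<1}. \<exists>g. ((\<lambda>t. - phi1 t * (u1 t) ^ (N - 1)) has_real_derivative g) (at r)
            \<and> g - lam ^ N * r ^ (N - 1) * f' (- u r) * phi r = mu / real N * phi r"
    and phi10: "phi1 0 = 0" and phi1z: "phi 1 = 0"
    using ev unfolding lin_eigenvalue_def by blast
  note cphi = C2_facts(1)[OF C2phi] and cphi1 = C2_facts(2)[OF C2phi] and dphi = C2_facts(3)[OF C2phi]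
  define W where "W t = (- phi1 t * u1 t ^ (N - 1)) * u t + u1 t ^ N * phi t" for t
  define K where "K t = - mu / real N * (- u t)
      + lam ^ N * t ^ (N - 1) * (real N * f (- u t) - f' (- u t) * (- u t))" for t
  have dW: "(W has_real_derivative phi t * K t) (at t)" if t: "t \<in> {0<..<1}" for t
  proof -
    obtain g where g: "((\<lambda>t. - phi1 t * (u1 t) ^ (N - 1)) has_real_derivative g) (at t)"
      "g - lam ^ N * t ^ (N - 1) * f' (- u t) * phi t = mu / real N * phi t"
      using eq t by blast
    have "(W has_real_derivative
        (g * u t + u1 t * (- phi1 t * u1 t ^ (N - 1)))
        + ((lam ^ N * real N * t ^ (N - 1) * f (- u t)) * phi t + phi1 t * u1 t ^ N)) (at t)"
      unfolding W_def[abs_def]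
      by (rule DERIV_add[OF DERIV_mult[OF g(1) du[OF t]] DERIV_mult[OF deq[OF t] dphi[OF t]]])
    moreover have "(g * u t + u1 t * (- phi1 t * u1 t ^ (N - 1)))
        + ((lam ^ N * real N * t ^ (N - 1) * f (- u t)) * phi t + phi1 t * u1 t ^ N)
        = phi t * K t"
    proof -
      have pw: "u1 t ^ (N - 1) * u1 t = u1 t ^ N"
        using N by (metis Suc_diff_le diff_Suc_1 power_Suc2)
      have gg: "g = mu / real N * phi t + lam ^ N * t ^ (N - 1) * f' (- u t) * phi t"
        using g(2) by linarith
      show ?thesis unfolding K_def gg using pw Npos
        by (simp add: algebra_simps)
    qed
    ultimately show ?thesis by simp
  qed
  have Kpos: "K t > 0" if t: "t \<in> {0<..<1}" for t
  proof -
    define s where "s = - u t"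
    have s: "s > 0" using negative t by (auto simp: s_def)
    have "f' s < real N * f s / s" using fpos[OF s] .
    then have "f' s * s < real N * f s" using s by (simp add: field_simps)
    then have a: "real N * f s - f' s * s > 0" by simp
    have b: "lam ^ N * t ^ (N - 1) > 0" using lam t by simp
    have c: "- mu / real N * s \<ge> 0" using mu Npos s
      by (simp add: divide_nonpos_pos mult_nonpos_nonneg)
    show ?thesis unfolding K_def s_def[symmetric] using a b c
      by (smt (verit) mult_pos_pos)
  qed
  have cW: "continuous_on {0..1} W"
    unfolding W_def[abs_def] by (intro continuous_intros cu cu1 cphi cphi1)
  have W0: "W 0 = 0" using phi10 u10 N by (simp add: W_def)
  have W1: "W 1 = 0" using phi1z u1z by (simp add: W_def)
  obtain r0 where r0: "r0 \<in> {0..1}" "phi r0 \<noteq> 0" using r0ex by blast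
  have r01: "r0 < 1" using r0 phi1z by (cases "r0 = 1") auto
  define Z where "Z = {t \<in> {0..1}. phi t = 0}"
  have Zc: "closed Z" unfolding Z_def by (rule continuous_closed_preimage_constant[OF cphi]) simp
  define b where "b = Inf (Z \<inter> {r0..})"
  have bZ: "b \<in> Z \<inter> {r0..}" unfolding b_def
  proof (rule closed_contains_Inf)
    have "1 \<in> Z \<inter> {r0..}" using r01 phi1z by (auto simp: Z_def)
    then show "Z \<inter> {r0..} \<noteq> {}" by blast
    show "bdd_below (Z \<inter> {r0..})" by (rule bdd_belowI[of _ r0]) auto
    show "closed (Z \<inter> {r0..})" using Zc by (intro closed_Int) auto
  qed
  have bl: "b \<le> t" if "t \<in> Z \<inter> {r0..}" for t
    unfolding b_def by (rule cInf_lower) (use that in auto)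
  have rb: "r0 < b" using bZ r0 by (cases "b = r0") (auto simp: Z_def)
  have b1: "b \<le> 1" and phib: "phi b = 0" using bZ by (auto simp: Z_def)
  obtain a where a: "0 \<le> a" "a \<le> r0" "a = 0 \<or> phi a = 0"
    and anz: "\<And>t. a < t \<Longrightarrow> t \<le> r0 \<Longrightarrow> phi t \<noteq> 0"
  proof (cases "Z \<inter> {..r0} = {}")
    case True
    show ?thesis
    proof (rule that[of 0])
      fix t :: real assume t: "0 < t" "t \<le> r0"
      then have "t \<notin> Z" using True by auto
      then show "phi t \<noteq> 0" using t r0 by (auto simp: Z_def)
    qed (use r0 in auto)
  next
    case False
    define a where "a = Sup (Z \<inter> {..r0})"
    have aZ: "a \<in> Z \<inter> {..r0}" unfolding a_def
      by (rule closed_contains_Sup) (use Zc False in \<open>auto intro!: closed_Int\<close>)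
    have al: "t \<le> a" if "t \<in> Z \<inter> {..r0}" for t
      unfolding a_def by (rule cSup_upper) (use that in auto)
    show ?thesis
    proof (rule that[of a])
      fix t assume "a < t" "t \<le> r0"
      then show "phi t \<noteq> 0" using al[of t] aZ r0 by (auto simp: Z_def)
    qed (use aZ in \<open>auto simp: Z_def\<close>)
  qed
  have nz: "phi t \<noteq> 0" if "a < t" "t < b" for t
  proof (cases "t \<le> r0")
    case True then show ?thesis using anz that by auto
  next
    case False
    then show ?thesis using bl[of t] that a r0 b1 by (auto simp: Z_def)
  qed
  define sg where "sg = sgn (phi r0)"
  have sg2: "sg * sg = 1" using r0 by (simp add: sg_def sgn_if)
  have sgr0: "sg * phi r0 > 0" using r0 by (simp add: sg_def sgn_if)
  have sphi: "sg * phi t > 0" if "a < t" "t < b" for t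
  proof -
    have nz': "sg * phi x \<noteq> 0" if "a < x" "x < b" for x
      using nz[OF that] sg2 by auto
    have cs: "continuous_on {x..y} (\<lambda>t. sg * phi t)" if "0 \<le> x" "y \<le> 1" for x y
      using that by (intro continuous_intros continuous_on_subset[OF cphi]) auto
    show ?thesis
    proof (cases "t \<le> r0")
      case True
      have "sg * phi t > 0 \<longleftrightarrow> sg * phi r0 > 0"
        by (rule nz_same_sign[where g = "\<lambda>t. sg * phi t"]) (use True that a rb b1 nz' cs in auto)
      then show ?thesis using sgr0 by simp
    next
      case False
      have "sg * phi r0 > 0 \<longleftrightarrow> sg * phi t > 0"
      proof (rule nz_same_sign[where g = "\<lambda>t. sg * phi t"])
        show "continuous_on {r0..t} (\<lambda>t. sg * phi t)" using cs r0 that b1 by auto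
        show "r0 \<le> t" using False by simp
        fix x assume x: "x \<in> {r0..t}"
        show "sg * phi x \<noteq> 0"
        proof (cases "x = r0")
          case True then show ?thesis using sgr0 by (metis less_irrefl)
        next
          case False then show ?thesis using x a that nz'[of x] by auto
        qed
      qed
      then show ?thesis using sgr0 by simp
    qed
  qed
  have ab: "a < b" using a rb by simp
  have inc: "sg * W a < sg * W b"
  proof (rule strict_inc[where F = "\<lambda>t. sg * W t" and F' = "\<lambda>t. sg * (phi t * K t)"])
    show "a < b" by (rule ab)
    show "continuous_on {a..b} (\<lambda>t. sg * W t)"
      using a b1 by (intro continuous_intros continuous_on_subset[OF cW]) auto
    fix t assume t: "a < t" "t < b"
    then have t01: "t \<in> {0<..<1}" using a b1 by auto
    show "((\<lambda>t. sg * W t) has_real_derivative sg * (phi t * K t)) (at t) \<and> sg * (phi t * K t) > 0"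
      using DERIV_cmult[OF dW[OF t01], of sg] sphi[OF t] Kpos[OF t01]
      by (simp add: mult.assoc[symmetric])
  qed
  have Wa: "sg * W a \<ge> 0"
  proof (cases "a = 0")
    case True then show ?thesis using W0 by simp
  next
    case False
    then have a01: "a \<in> {0<..<1}" and pa: "phi a = 0" using a ab b1 by auto
    have "sg * phi1 a \<ge> 0"
      by (rule deriv_sign_right[where g = "\<lambda>t. sg * phi t" and b = b])
        (use DERIV_cmult[OF dphi[OF a01], of sg] pa ab sphi in auto)
    moreover have "u a < 0" using negative a01 by auto
    moreover have "u1 a ^ (N - 1) \<ge> 0" using u1nn a01 by auto
    ultimately show ?thesis using pa unfolding W_def
      by (simp add: mult_nonneg_nonneg mult_nonpos_nonpos mult_le_0_iff mult.assoc[symmetric])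
  qed
  have Wb: "sg * W b \<le> 0"
  proof (cases "b = 1")
    case True then show ?thesis using W1 by simp
  next
    case False
    then have b01: "b \<in> {0<..<1}" using a rb b1 by auto
    have "sg * phi1 b \<le> 0"
      by (rule deriv_sign_left[where g = "\<lambda>t. sg * phi t" and a = a])
        (use DERIV_cmult[OF dphi[OF b01], of sg] phib ab sphi in auto)
    moreover have "u b < 0" using negative b01 by auto
    moreover have "u1 b ^ (N - 1) \<ge> 0" using u1nn b01 by auto
    ultimately show ?thesis using phib unfolding W_def
      by (simp add: mult_nonneg_nonneg mult_nonpos_nonpos mult_le_0_iff mult.assoc[symmetric])
  qed
  show False using inc Wa Wb by simp
qed

theorem lemma5p3:
  fixes N :: nat and f f' :: "real \<Rightarrow> real" and lam :: real and u u1 :: "real \<Rightarrow> real"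
  assumes N: "N \<ge> 1"
    and f_C1: "\<And>s. (f has_real_derivative f' s) (at s)" "continuous_on UNIV f'"
    and f1: "\<And>s. s \<noteq> 0 \<Longrightarrow> f s * s ^ N > 0"
    and f0: "\<exists>L>0. ((\<lambda>s. f s / s ^ N) \<longlongrightarrow> L) (at 0)"
    and finf: "((\<lambda>s. f s / s ^ N) \<longlongrightarrow> 0) at_infinity"
    and fpos: "\<And>s. s > 0 \<Longrightarrow> f' s < real N * f s / s"
    and fneg: "\<And>s. s < 0 \<Longrightarrow> f' s > real N * f s / s"
    and lam: "lam > 0"
    and sol: "MO_solution N lam f u u1"
    and negative: "\<forall>r\<in>{0..<1}. u r < 0"
  shows "stable_sol N lam f' u u1 \<and> \<not> degenerate_sol N lam f' u u1
         \<and> morse_index N lam f' u u1 = 0"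
proof -
  have P: "mu > 0" if "lin_eigenvalue N lam f' u u1 mu" for mu
    by (rule mu_pos[OF N f1 fpos lam sol negative that])
  have E: "{mu. lin_eigenvalue N lam f' u u1 mu \<and> mu < 0} = {}" using P by force
  have "stable_sol N lam f' u u1" unfolding stable_sol_def using P by blast
  moreover have "\<not> degenerate_sol N lam f' u u1" unfolding degenerate_sol_def using P[of 0] by auto
  moreover have "morse_index N lam f' u u1 = 0" unfolding morse_index_def E by simp
  ultimately show ?thesis by blast
qed

end
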